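(* A countable locally finite group $G$ is finite if and only if $\operatorname{asdim}_{AN}(G,d_G)=0$ for every proper left invariant metric $d_G$ on $G$.
   Context: A group is locally finite if every finitely generated subgroup is finite. A metric $d_G$ on $G$ is proper left invariant if $d_G(gh,gk)=d_G(h,k)$ for all $g,h,k$ and every ball is finite. $\operatorname{asdim}_{AN}(X)=0$ means there are constants $C>0$, $k\in\mathbb{R}$ such that for every $s>0$ each $s$-scale connected component of $X$ (class of the relation "joined by a finite chain $x_0,\dots,x_m$ with $d(x_i,x_{i+1})<s$") has diameter at most $Cs+k$. *)

theory Defs
  imports "HOL-Algebra.Algebra"
begin

definition locally_finite_group :: "('a, 'b) monoid_scheme \<Rightarrow> bool" where
  "locally_finite_group G \<longleftrightarrow>
     (\<forall>S. S \<subseteq> carrier G \<and> finite S \<longrightarrow> finite (generate G S))"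

definition metric_on :: "'a set \<Rightarrow> ('a \<Rightarrow> 'a \<Rightarrow> real) \<Rightarrow> bool" where
  "metric_on A \<rho> \<longleftrightarrow>
     (\<forall>x\<in>A. \<forall>y\<in>A. \<rho> x y \<ge> 0 \<and> (\<rho> x y = 0 \<longleftrightarrow> x = y) \<and> \<rho> x y = \<rho> y x) \<and>
     (\<forall>x\<in>A. \<forall>y\<in>A. \<forall>z\<in>A. \<rho> x z \<le> \<rho> x y + \<rho> y z)"

definition proper_left_invariant_metric ::
  "('a, 'b) monoid_scheme \<Rightarrow> ('a \<Rightarrow> 'a \<Rightarrow> real) \<Rightarrow> bool" where
  "proper_left_invariant_metric G \<rho> \<longleftrightarrow>
     metric_on (carrier G) \<rho> \<and>
     (\<forall>g\<in>carrier G. \<forall>h\<in>carrier G. \<forall>k\<in>carrier G.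
        \<rho> (g \<otimes>\<^bsub>G\<^esub> h) (g \<otimes>\<^bsub>G\<^esub> k) = \<rho> h k) \<and>
     (\<forall>x\<in>carrier G. \<forall>r::real. finite {y \<in> carrier G. \<rho> x y \<le> r})"

definition scale_connected :: "'a set \<Rightarrow> ('a \<Rightarrow> 'a \<Rightarrow> real) \<Rightarrow> real \<Rightarrow> 'a \<Rightarrow> 'a \<Rightarrow> bool" where
  "scale_connected A \<rho> s x y \<longleftrightarrow>
     x \<in> A \<and> (\<lambda>a b. a \<in> A \<and> b \<in> A \<and> \<rho> a b < s)\<^sup>*\<^sup>* x y"

definition asdim_AN_zero :: "'a set \<Rightarrow> ('a \<Rightarrow> 'a \<Rightarrow> real) \<Rightarrow> bool" where
  "asdim_AN_zero A \<rho> \<longleftrightarrow>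
     (\<exists>C::real. \<exists>k::real. C > 0 \<and>
        (\<forall>s>0. \<forall>x y. scale_connected A \<rho> s x y \<longrightarrow> \<rho> x y \<le> C * s + k))"

end

theory Submission
  imports Defs "HOL-Library.Countable_Set"
begin


fun BB :: "nat \<Rightarrow> nat" where
  "BB 0 = 1"
| "BB (Suc j) = 2 ^ (4 * (BB j * (BB j + 2)))"

lemma lt_pow2: "(x::nat) < 2 ^ x" by simp

lemma BB_step: "BB j < BB (Suc j)"
proof -
  have "BB j \<le> 4 * (BB j * (BB j + 2))" by simp
  hence "BB j < 2 ^ (4 * (BB j * (BB j + 2)))"
    using lt_pow2[of "4 * (BB j * (BB j + 2))"] by linarith
  thus ?thesis by (simp only: BB.simps)
qed

lemma BB_mono: "strict_mono BB"
  unfolding strict_mono_Suc_iff using BB_step by blast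

declare BB.simps(2)[simp del]

lemma BB_ge: "j < BB j"
proof (induct j)
  case 0 then show ?case by simp
next
  case (Suc j) then show ?case using BB_step[of j] by linarith
qed

definition blk :: "nat \<Rightarrow> nat" where "blk i = (LEAST j. i < BB (Suc j))"

lemma blk1: "i < BB (Suc (blk i))"
  unfolding blk_def by (rule LeastI[of _ i]) (use BB_ge[of "Suc i"] in auto)

lemma blk2: "i < BB (Suc j) \<Longrightarrow> blk i \<le> j"
  unfolding blk_def by (rule Least_le)

definition ww :: "nat \<Rightarrow> nat" where "ww i = BB (blk i)"

lemma ww_pos: "1 \<le> ww i"
  unfolding ww_def using BB_ge[of "blk i"] by simp

lemma ww_le: "i < BB (Suc j) \<Longrightarrow> ww i \<le> BB j"
  unfolding ww_def using blk2 BB_mono by (simp add: strict_mono_less_eq)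

lemma ww_bound: "ww i < BB (Suc j) \<Longrightarrow> i < BB (Suc j)"
proof -
  assume a: "ww i < BB (Suc j)"
  hence "blk i < Suc j" unfolding ww_def using strict_mono_less[OF BB_mono] by blast
  hence "BB (Suc (blk i)) \<le> BB (Suc j)" using BB_mono by (simp add: strict_mono_less_eq)
  thus ?thesis using blk1[of i] by linarith
qed

lemma arith16: "4 * x * x + 2 * (x::nat) < 16 ^ x"
proof (induct x)
  case 0 then show ?case by simp
next
  case (Suc x)
  have "(2::nat) ^ x \<le> 16 ^ x" by (rule power_mono) auto
  hence "x + 1 \<le> 16 ^ x" using lt_pow2[of x] by linarith
  then show ?case using Suc by (simp add: algebra_simps)
qed

lemma sum_pow_le: "(\<Sum>i\<le>R. (a::nat)^i) \<le> (a+1)^R"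
proof (induct R)
  case 0 then show ?case by simp
next
  case (Suc R)
  have "a ^ R \<le> (a+1)^R" by (rule power_mono) auto
  hence "a * a ^ R \<le> a * (a+1)^R" by (rule mult_le_mono2)
  moreover have "(\<Sum>i\<le>Suc R. a^i) = a * a ^ R + (\<Sum>i\<le>R. a^i)" by simp
  ultimately have "(\<Sum>i\<le>Suc R. a^i) \<le> a * (a+1)^R + (a+1)^R" using Suc by linarith
  also have "\<dots> = (a+1)^Suc R" by (simp add: algebra_simps)
  finally show ?case .
qed

lemma count_bound:
  fixes R :: nat
  assumes "n = BB (Suc j)" "R = BB j * (BB j + 2)"
  shows "(\<Sum>i\<le>R. (2*n)^i) < 2 ^ n"
proof -
  have n: "n = 2 ^ (4*R)" using assms by (simp add: BB.simps)
  have "2*n + 1 \<le> 2 ^ (4*R+2)" using n by simp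
  have "(\<Sum>i\<le>R. (2*n)^i) \<le> (2*n+1)^R" by (rule sum_pow_le)
  also have "\<dots> \<le> (2 ^ (4*R+2))^R" by (rule power_mono) (use \<open>2*n + 1 \<le> _\<close> in auto)
  also have "\<dots> = 2 ^ ((4*R+2)*R)" by (rule power_mult[symmetric])
  also have "\<dots> = 2 ^ (4*R*R + 2*R)" by (simp add: algebra_simps)
  also have "\<dots> < 2 ^ (16^R)" using arith16[of R] by simp
  also have "16^R = (2::nat)^(4*R)" by (simp add: power_mult)
  finally show ?thesis using n by simp
qed



locale lfg = group G for G (structure) +
  assumes cnt: "countable (carrier G)"
    and infc: "infinite (carrier G)"
    and lf: "locally_finite_group G"
begin

definition en :: "nat \<Rightarrow> 'a" where "en = from_nat_into (carrier G)"

lemma en_carrier: "en k \<in> carrier G"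
  unfolding en_def by (rule from_nat_into) (use infc in auto)

lemma en_surj: "g \<in> carrier G \<Longrightarrow> \<exists>k. en k = g"
  unfolding en_def using from_nat_into_surj[OF cnt] by blast

definition nxt :: "'a set \<Rightarrow> 'a" where
  "nxt S = en (LEAST k. en k \<notin> generate G S)"

primrec Tset :: "nat \<Rightarrow> 'a set" where
  "Tset 0 = {}"
| "Tset (Suc n) = insert (nxt (Tset n)) (Tset n)"

definition tt :: "nat \<Rightarrow> 'a" where "tt n = nxt (Tset n)"

definition HH :: "nat \<Rightarrow> 'a set" where "HH n = generate G (Tset n)"

lemma Tset_eq: "Tset n = tt ` {..<n}"
  by (induct n) (auto simp: tt_def lessThan_Suc)

lemma tt_carrier: "tt n \<in> carrier G"
  unfolding tt_def nxt_def by (rule en_carrier)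

lemma Tset_carrier: "Tset n \<subseteq> carrier G"
  using Tset_eq tt_carrier by auto

lemma HH_carrier: "HH n \<subseteq> carrier G"
  unfolding HH_def by (rule generate_incl[OF Tset_carrier])

lemma HH_finite: "finite (HH n)"
  using lf Tset_carrier unfolding locally_finite_group_def HH_def Tset_eq by auto

lemma HH_subgroup: "subgroup (HH n) G"
  unfolding HH_def by (rule generate_is_subgroup[OF Tset_carrier])

lemma tt_notin: "tt n \<notin> HH n"
proof -
  have "HH n \<noteq> carrier G" using HH_finite infc by metis
  then obtain g where g: "g \<in> carrier G" "g \<notin> HH n" using HH_carrier by blast
  then obtain k where "en k = g" using en_surj by blast
  hence "\<exists>k. en k \<notin> HH n" using g by blast
  hence "en (LEAST k. en k \<notin> HH n) \<notin> HH n" by (rule LeastI_ex)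
  thus ?thesis unfolding tt_def nxt_def HH_def .
qed

lemma HH_mono: "HH n \<subseteq> HH (Suc n)"
  unfolding HH_def by (rule mono_generate) auto

lemma tt_in: "tt n \<in> HH (Suc n)"
  unfolding HH_def by (rule generate.incl) (simp add: tt_def)

lemma HH_double: "2 * card (HH n) \<le> card (HH (Suc n))"
proof -
  let ?H = "HH n" and ?H' = "HH (Suc n)" and ?t = "tt n"
  let ?tH = "(\<lambda>h. ?t \<otimes> h) ` ?H"
  have tH: "?tH \<subseteq> ?H'"
    using HH_mono tt_in subgroup.m_closed[OF HH_subgroup] by blast
  have disj: "?tH \<inter> ?H = {}"
  proof (rule ccontr)
    assume "?tH \<inter> ?H \<noteq> {}"
    then obtain h where h: "h \<in> ?H" "?t \<otimes> h \<in> ?H" by blast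
    have hc: "h \<in> carrier G" using h HH_carrier by blast
    have "?t = (?t \<otimes> h) \<otimes> inv h" using hc tt_carrier by (simp add: m_assoc)
    also have "\<dots> \<in> ?H" using h subgroup.m_closed[OF HH_subgroup] subgroup.m_inv_closed[OF HH_subgroup] by blast
    finally show False using tt_notin by blast
  qed
  have inj: "inj_on (\<lambda>h. ?t \<otimes> h) ?H"
  proof (rule inj_onI)
    fix x y assume "x \<in> ?H" "y \<in> ?H" "?t \<otimes> x = ?t \<otimes> y"
    thus "x = y" using HH_carrier tt_carrier l_cancel by blast
  qed
  have "card (?H \<union> ?tH) = card ?H + card ?tH"
    using disj HH_finite by (simp add: card_Un_disjoint Int_commute)
  also have "card ?tH = card ?H" using inj by (simp add: card_image)
  finally have "card (?H \<union> ?tH) = 2 * card ?H" by simp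
  moreover have "card (?H \<union> ?tH) \<le> card ?H'"
    using HH_mono tH HH_finite by (intro card_mono) auto
  ultimately show ?thesis by simp
qed

lemma HH_card: "2 ^ n \<le> card (HH n)"
proof (induct n)
  case 0
  have "HH 0 = {\<one>}" unfolding HH_def by (simp add: generate_empty)
  then show ?case by simp
next
  case (Suc n) then show ?case using HH_double[of n] by simp
qed

lemma tt_inj: "inj tt"
proof (rule injI)
  fix m n assume e: "tt m = tt n"
  show "m = n"
  proof (rule ccontr)
    assume "m \<noteq> n"
    hence "m < n \<or> n < m" by arith
    moreover have "\<And>a b. a < b \<Longrightarrow> tt a \<in> HH b"
      unfolding HH_def Tset_eq by (rule generate.incl) auto
    ultimately show False using tt_notin e by metis
  qed
qed

lemma HH_cover: "g \<in> carrier G \<Longrightarrow> \<exists>n. g \<in> HH n"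
proof (rule ccontr)
  assume g: "g \<in> carrier G" and nn: "\<not> (\<exists>n. g \<in> HH n)"
  obtain k where k: "en k = g" using en_surj g by blast
  have "\<And>n. tt n \<in> en ` {..k}"
  proof -
    fix n
    have "(LEAST k. en k \<notin> HH n) \<le> k" using nn k by (intro Least_le) auto
    thus "tt n \<in> en ` {..k}" unfolding tt_def nxt_def HH_def by auto
  qed
  hence "range tt \<subseteq> en ` {..k}" by blast
  hence "finite (range tt)" using finite_subset by blast
  thus False using tt_inj finite_imageD by blast
qed

end


context lfg begin

definition lv :: "nat \<times> bool \<Rightarrow> 'a" where
  "lv l = (if snd l then tt (fst l) else inv (tt (fst l)))"

definition wp :: "(nat \<times> bool) list \<Rightarrow> 'a" where
  "wp xs = foldr (\<lambda>l a. lv l \<otimes> a) xs \<one>"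

definition wt :: "(nat \<times> bool) list \<Rightarrow> nat" where
  "wt xs = sum_list (map (\<lambda>l. ww (fst l)) xs)"

definition flp :: "(nat \<times> bool) list \<Rightarrow> (nat \<times> bool) list" where
  "flp xs = rev (map (\<lambda>l. (fst l, \<not> snd l)) xs)"

lemma lv_carrier: "lv l \<in> carrier G"
  unfolding lv_def using tt_carrier by auto

lemma wp_carrier: "wp xs \<in> carrier G"
  unfolding wp_def by (induct xs) (auto simp: lv_carrier)

lemma wp_Nil[simp]: "wp [] = \<one>" unfolding wp_def by simp
lemma wp_Cons[simp]: "wp (l # xs) = lv l \<otimes> wp xs" unfolding wp_def by simp

lemma wp_append: "wp (xs @ ys) = wp xs \<otimes> wp ys"
  by (induct xs) (auto simp: wp_carrier lv_carrier m_assoc)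

lemma lv_flip: "lv (fst l, \<not> snd l) = inv (lv l)"
  unfolding lv_def using tt_carrier by auto

lemma wp_flp: "wp (flp xs) = inv (wp xs)"
proof (induct xs)
  case Nil then show ?case by (simp add: flp_def)
next
  case (Cons l xs)
  have "wp (flp (l # xs)) = wp (flp xs @ [(fst l, \<not> snd l)])" by (simp add: flp_def)
  also have "\<dots> = inv (wp xs) \<otimes> inv (lv l)" using Cons by (simp add: wp_append lv_flip lv_carrier)
  also have "\<dots> = inv (lv l \<otimes> wp xs)" using lv_carrier wp_carrier by (simp add: inv_mult_group)
  finally show ?case by simp
qed

lemma wt_Cons[simp]: "wt (l # xs) = ww (fst l) + wt xs" unfolding wt_def by simp
lemma wt_Nil[simp]: "wt [] = 0" unfolding wt_def by simp
lemma wt_append: "wt (xs @ ys) = wt xs + wt ys" unfolding wt_def by simp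
lemma wt_flp: "wt (flp xs) = wt xs" unfolding wt_def flp_def by (simp add: rev_map[symmetric] o_def)

lemma length_wt: "length xs \<le> wt xs"
proof (induct xs)
  case Nil then show ?case by simp
next
  case (Cons l xs) then show ?case using ww_pos[of "fst l"] by simp
qed

lemma letter_wt: "l \<in> set xs \<Longrightarrow> ww (fst l) \<le> wt xs"
  by (induct xs) auto

lemma gen_word: "h \<in> generate G (Tset n) \<Longrightarrow> \<exists>xs. wp xs = h \<and> (\<forall>l\<in>set xs. fst l < n)"
proof (induct rule: generate.induct)
  case one then show ?case by (intro exI[of _ "[]"]) auto
next
  case (incl h)
  then obtain i where i: "i < n" "h = tt i" using Tset_eq by auto
  show ?case using i tt_carrier by (intro exI[of _ "[(i,True)]"]) (auto simp: lv_def)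
next
  case (inv h)
  then obtain i where i: "i < n" "h = tt i" using Tset_eq by auto
  show ?case using i tt_carrier by (intro exI[of _ "[(i,False)]"]) (auto simp: lv_def)
next
  case (eng h1 h2)
  then obtain xs ys where "wp xs = h1" "\<forall>l\<in>set xs. fst l < n" "wp ys = h2" "\<forall>l\<in>set ys. fst l < n"
    by blast
  then show ?case by (intro exI[of _ "xs @ ys"]) (auto simp: wp_append)
qed

lemma word_ex: "g \<in> carrier G \<Longrightarrow> \<exists>xs. wp xs = g"
  using HH_cover gen_word unfolding HH_def by blast

definition LL :: "'a \<Rightarrow> nat" where
  "LL g = (LEAST m. \<exists>xs. wp xs = g \<and> wt xs = m)"

lemma LL_ex: "g \<in> carrier G \<Longrightarrow> \<exists>xs. wp xs = g \<and> wt xs = LL g"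
  unfolding LL_def by (rule LeastI_ex) (use word_ex in blast)

lemma LL_le: "wp xs = g \<Longrightarrow> LL g \<le> wt xs"
  unfolding LL_def by (rule Least_le) blast

lemma LL_one: "LL \<one> = 0"
  using LL_le[of "[]" \<one>] by simp

lemma LL_zero: "g \<in> carrier G \<Longrightarrow> LL g = 0 \<Longrightarrow> g = \<one>"
proof -
  assume g: "g \<in> carrier G" "LL g = 0"
  then obtain xs where "wp xs = g" "wt xs = 0" using LL_ex by metis
  moreover hence "xs = []" using length_wt[of xs] by simp
  ultimately show ?thesis by simp
qed

lemma LL_inv: "g \<in> carrier G \<Longrightarrow> LL (inv g) = LL g"
proof -
  assume g: "g \<in> carrier G"
  have A: "\<And>g. g \<in> carrier G \<Longrightarrow> LL (inv g) \<le> LL g"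
  proof -
    fix g assume "g \<in> carrier G"
    then obtain xs where "wp xs = g" "wt xs = LL g" using LL_ex by metis
    thus "LL (inv g) \<le> LL g" using LL_le[of "flp xs" "inv g"] by (simp add: wp_flp wt_flp)
  qed
  show ?thesis using A[OF g] A[of "inv g"] g by simp
qed

lemma LL_mult: "g \<in> carrier G \<Longrightarrow> h \<in> carrier G \<Longrightarrow> LL (g \<otimes> h) \<le> LL g + LL h"
proof -
  assume "g \<in> carrier G" "h \<in> carrier G"
  then obtain xs ys where "wp xs = g" "wt xs = LL g" "wp ys = h" "wt ys = LL h" using LL_ex by metis
  thus ?thesis using LL_le[of "xs @ ys" "g \<otimes> h"] by (simp add: wp_append wt_append)
qed

lemma LL_lv: "LL (lv l) \<le> ww (fst l)"
  using LL_le[of "[l]" "lv l"] lv_carrier by simp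

definition rho :: "'a \<Rightarrow> 'a \<Rightarrow> real" where
  "rho x y = real (LL (inv x \<otimes> y))"

lemma rho_proper: "proper_left_invariant_metric G rho"
proof -
  have M: "metric_on (carrier G) rho"
    unfolding metric_on_def
  proof (intro conjI ballI)
    fix x y assume x: "x \<in> carrier G" and y: "y \<in> carrier G"
    show "rho x y \<ge> 0" unfolding rho_def by simp
    show "(rho x y = 0) = (x = y)"
    proof
      assume "rho x y = 0"
      hence "inv x \<otimes> y = \<one>" using LL_zero x y unfolding rho_def by simp
      thus "x = y" using x y by (metis inv_equality l_inv_ex inv_inv)
    next
      assume "x = y" thus "rho x y = 0" using x unfolding rho_def by (simp add: LL_one)
    qed
    have "inv (inv x \<otimes> y) = inv y \<otimes> x" using x y by (simp add: inv_mult_group)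
    thus "rho x y = rho y x" unfolding rho_def using LL_inv[of "inv x \<otimes> y"] x y by simp
  next
    fix x y z assume x: "x \<in> carrier G" and y: "y \<in> carrier G" and z: "z \<in> carrier G"
    have "inv x \<otimes> z = (inv x \<otimes> y) \<otimes> (inv y \<otimes> z)" using x y z
      by (simp add: m_assoc[symmetric]) (simp add: m_assoc r_inv)
    thus "rho x z \<le> rho x y + rho y z" unfolding rho_def
      using LL_mult[of "inv x \<otimes> y" "inv y \<otimes> z"] x y z by simp
  qed
  have I: "\<forall>g\<in>carrier G. \<forall>h\<in>carrier G. \<forall>k\<in>carrier G. rho (g \<otimes> h) (g \<otimes> k) = rho h k"
  proof (intro ballI)
    fix g h k assume g: "g \<in> carrier G" and h: "h \<in> carrier G" and k: "k \<in> carrier G"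
    have "inv (g \<otimes> h) \<otimes> (g \<otimes> k) = inv h \<otimes> k" using g h k
      by (simp add: inv_mult_group m_assoc[symmetric]) (simp add: m_assoc)
    thus "rho (g \<otimes> h) (g \<otimes> k) = rho h k" unfolding rho_def by simp
  qed
  have P: "\<forall>x\<in>carrier G. \<forall>r::real. finite {y \<in> carrier G. rho x y \<le> r}"
  proof (intro ballI allI)
    fix x and r :: real assume x: "x \<in> carrier G"
    define R where "R = nat \<lfloor>r\<rfloor>"
    define Lam where "Lam = {..<BB (Suc R)} \<times> (UNIV :: bool set)"
    define W where "W = {xs. set xs \<subseteq> Lam \<and> length xs \<le> R}"
    have fW: "finite W" unfolding W_def Lam_def by (rule finite_lists_length_le) auto
    have "{y \<in> carrier G. rho x y \<le> r} \<subseteq> (\<lambda>xs. x \<otimes> wp xs) ` W"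
    proof
      fix y assume "y \<in> {y \<in> carrier G. rho x y \<le> r}"
      hence y: "y \<in> carrier G" "real (LL (inv x \<otimes> y)) \<le> r" unfolding rho_def by auto
      hence le: "LL (inv x \<otimes> y) \<le> R" unfolding R_def by linarith
      obtain xs where xs: "wp xs = inv x \<otimes> y" "wt xs = LL (inv x \<otimes> y)" using LL_ex x y by blast
      have "xs \<in> W" unfolding W_def Lam_def
      proof (intro CollectI conjI subsetI)
        show "length xs \<le> R" using length_wt[of xs] xs le by simp
        fix l assume "l \<in> set xs"
        hence "ww (fst l) \<le> R" using letter_wt[of l xs] xs le by simp
        hence "ww (fst l) < BB (Suc R)" using BB_ge[of "Suc R"] by simp
        thus "l \<in> {..<BB (Suc R)} \<times> UNIV" using ww_bound by (cases l) auto
      qed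
      moreover have "y = x \<otimes> wp xs" using xs x y by (simp add: m_assoc[symmetric])
      ultimately show "y \<in> (\<lambda>xs. x \<otimes> wp xs) ` W" by blast
    qed
    thus "finite {y \<in> carrier G. rho x y \<le> r}" using fW finite_subset by blast
  qed
  show ?thesis unfolding proper_left_invariant_metric_def using M I P by blast
qed

end


context lfg begin

lemma rho_inv: "g \<in> carrier G \<Longrightarrow> a \<in> carrier G \<Longrightarrow> b \<in> carrier G \<Longrightarrow> rho (g \<otimes> a) (g \<otimes> b) = rho a b"
  using rho_proper unfolding proper_left_invariant_metric_def by blast

lemma translate:
  assumes "(\<lambda>a b. a \<in> carrier G \<and> b \<in> carrier G \<and> rho a b < s)\<^sup>*\<^sup>* a b" "g \<in> carrier G"
  shows "(\<lambda>a b. a \<in> carrier G \<and> b \<in> carrier G \<and> rho a b < s)\<^sup>*\<^sup>* (g \<otimes> a) (g \<otimes> b)"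
  using assms(1)
proof (induct rule: rtranclp_induct)
  case base then show ?case by simp
next
  case (step y z)
  have "g \<otimes> y \<in> carrier G \<and> g \<otimes> z \<in> carrier G \<and> rho (g \<otimes> y) (g \<otimes> z) < s"
    using step(2) assms(2) rho_inv by auto
  with step(3) show ?case by (rule rtranclp.rtrancl_into_rtrancl)
qed

lemma word_conn:
  "(\<forall>l\<in>set xs. real (ww (fst l)) < s) \<Longrightarrow>
   (\<lambda>a b. a \<in> carrier G \<and> b \<in> carrier G \<and> rho a b < s)\<^sup>*\<^sup>* \<one> (wp xs)"
proof (induct xs)
  case Nil then show ?case by simp
next
  case (Cons l xs)
  let ?R = "\<lambda>a b. a \<in> carrier G \<and> b \<in> carrier G \<and> rho a b < s"
  have "rho \<one> (lv l) = real (LL (lv l))" unfolding rho_def using lv_carrier by simp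
  also have "\<dots> < s" using LL_lv[of l] Cons(2) by (meson le_less_trans list.set_intros(1) of_nat_le_iff)
  finally have "?R \<one> (lv l)" using lv_carrier by simp
  hence 1: "?R\<^sup>*\<^sup>* \<one> (lv l)" by blast
  have "?R\<^sup>*\<^sup>* \<one> (wp xs)" using Cons by simp
  hence "?R\<^sup>*\<^sup>* (lv l \<otimes> \<one>) (lv l \<otimes> wp xs)" using lv_carrier by (rule translate)
  hence "?R\<^sup>*\<^sup>* (lv l) (lv l \<otimes> wp xs)" using lv_carrier by simp
  with 1 show ?case by simp
qed

lemma not_asdim: "\<not> asdim_AN_zero (carrier G) rho"
proof
  assume "asdim_AN_zero (carrier G) rho"
  then obtain C k :: real where C: "C > 0" and
    H: "\<And>s x y. s > 0 \<Longrightarrow> scale_connected (carrier G) rho s x y \<Longrightarrow> rho x y \<le> C * s + k"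
    unfolding asdim_AN_zero_def by blast
  define K where "K = nat \<lceil>max C k\<rceil>"
  have CK: "C \<le> real K" "k \<le> real K" unfolding K_def by linarith+
  define c where "c = BB K"
  have Kc: "K \<le> c" unfolding c_def using BB_ge[of K] by simp
  define n where "n = BB (Suc K)"
  define R where "R = c * (c + 2)"
  define Lam where "Lam = {..<n} \<times> (UNIV :: bool set)"
  define W where "W = {xs. set xs \<subseteq> Lam \<and> length xs \<le> R}"
  have fL: "finite Lam" and cL: "card Lam = 2 * n" unfolding Lam_def by (auto simp: card_cartesian_product)
  have fW: "finite W" unfolding W_def by (rule finite_lists_length_le[OF fL])
  have "card W = (\<Sum>i\<le>R. (2*n)^i)" unfolding W_def using card_lists_length_le[OF fL] cL by simp
  also have "\<dots> < 2 ^ n" by (rule count_bound) (auto simp: n_def R_def c_def)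
  also have "\<dots> \<le> card (HH n)" by (rule HH_card)
  finally have cW: "card W < card (HH n)" .
  have sub: "{g \<in> carrier G. LL g \<le> R} \<subseteq> wp ` W"
  proof
    fix g assume "g \<in> {g \<in> carrier G. LL g \<le> R}"
    hence g: "g \<in> carrier G" "LL g \<le> R" by auto
    obtain xs where xs: "wp xs = g" "wt xs = LL g" using LL_ex g by blast
    have "xs \<in> W" unfolding W_def Lam_def
    proof (intro CollectI conjI subsetI)
      show "length xs \<le> R" using length_wt[of xs] xs g by simp
      fix l assume "l \<in> set xs"
      hence "ww (fst l) \<le> R" using letter_wt[of l xs] xs g by simp
      moreover have "R < n"
      proof -
        have "n = 2 ^ (4 * R)" unfolding n_def R_def c_def by (simp add: BB.simps)
        moreover have "(2::nat) ^ R \<le> 2 ^ (4 * R)" by (rule power_increasing) auto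
        ultimately show ?thesis using lt_pow2[of R] by linarith
      qed
      ultimately have "ww (fst l) < BB (Suc K)" unfolding n_def by simp
      thus "l \<in> {..<n} \<times> UNIV" using ww_bound unfolding n_def by (cases l) auto
    qed
    thus "g \<in> wp ` W" using xs by blast
  qed
  have "\<not> HH n \<subseteq> {g \<in> carrier G. LL g \<le> R}"
  proof
    assume "HH n \<subseteq> {g \<in> carrier G. LL g \<le> R}"
    hence "HH n \<subseteq> wp ` W" using sub by blast
    hence "card (HH n) \<le> card (wp ` W)" using fW by (intro card_mono) auto
    also have "\<dots> \<le> card W" by (rule card_image_le[OF fW])
    finally show False using cW by simp
  qed
  then obtain g where g: "g \<in> HH n" "\<not> LL g \<le> R" using HH_carrier by blast
  have gc: "g \<in> carrier G" using g HH_carrier by blast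
  obtain xs where xs: "wp xs = g" "\<forall>l\<in>set xs. fst l < n"
    using gen_word g unfolding HH_def by blast
  define s where "s = real c + 1"
  have "\<forall>l\<in>set xs. real (ww (fst l)) < s"
  proof
    fix l assume "l \<in> set xs"
    hence "ww (fst l) \<le> c" using xs ww_le unfolding n_def c_def by blast
    thus "real (ww (fst l)) < s" unfolding s_def by simp
  qed
  hence "(\<lambda>a b. a \<in> carrier G \<and> b \<in> carrier G \<and> rho a b < s)\<^sup>*\<^sup>* \<one> g"
    using word_conn xs by blast
  hence "scale_connected (carrier G) rho s \<one> g" unfolding scale_connected_def by simp
  hence le: "rho \<one> g \<le> C * s + k" using H s_def by simp
  have a: "rho \<one> g = real (LL g)" unfolding rho_def using gc by simp
  have b: "real (LL g) > real R" using g by simp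
  have c: "real R = real c * (real c + 2)" unfolding R_def by (simp add: algebra_simps)
  have d: "real c * (real c + 2) \<ge> real K * (real c + 2)" using Kc by (intro mult_right_mono) auto
  have "rho \<one> g > real K * (real c + 2)" using a b c d by linarith
  moreover have "C * s + k \<le> real K * (real c + 2)"
  proof -
    have "C * s \<le> real K * s" using CK unfolding s_def by (intro mult_right_mono) auto
    thus ?thesis using CK unfolding s_def by (simp add: algebra_simps)
  qed
  ultimately show False using le by simp
qed

end


lemma sc_mem: "scale_connected A \<rho> s x y \<Longrightarrow> x \<in> A \<and> y \<in> A"
  unfolding scale_connected_def
proof (elim conjE)
  assume x: "x \<in> A" and r: "(\<lambda>a b. a \<in> A \<and> b \<in> A \<and> \<rho> a b < s)\<^sup>*\<^sup>* x y"
  from r have "y \<in> A" by (induct rule: rtranclp_induct) (use x in auto)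
  with x show ?thesis by simp
qed

lemma finite_asdim:
  assumes fin: "finite A"
  shows "asdim_AN_zero A \<rho>"
proof -
  define S where "S = insert 0 ((\<lambda>p. \<rho> (fst p) (snd p)) ` (A \<times> A))"
  define M where "M = Max S"
  have fM: "finite S" unfolding S_def using fin by simp
  have main: "\<forall>s>0. \<forall>x y. scale_connected A \<rho> s x y \<longrightarrow> \<rho> x y \<le> 1 * s + M"
  proof (intro allI impI)
    fix s :: real and x y assume s: "s > 0" and c: "scale_connected A \<rho> s x y"
    from sc_mem[OF c] have xy: "(x,y) \<in> A \<times> A" by simp
    have "(\<lambda>p. \<rho> (fst p) (snd p)) (x,y) \<in> (\<lambda>p. \<rho> (fst p) (snd p)) ` (A \<times> A)"
      using xy by (rule imageI)
    hence "\<rho> x y \<in> S" unfolding S_def by simp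
    hence "\<rho> x y \<le> M" unfolding M_def using fM by (rule Max_ge[rotated])
    thus "\<rho> x y \<le> 1 * s + M" using s by simp
  qed
  have "(1::real) > 0" by simp
  with main have "\<exists>C::real. \<exists>k::real. C > 0 \<and>
        (\<forall>s>0. \<forall>x y. scale_connected A \<rho> s x y \<longrightarrow> \<rho> x y \<le> C * s + k)" by blast
  thus ?thesis unfolding asdim_AN_zero_def .
qed

lemma (in lfg) exists_bad:
  "\<exists>\<rho>. proper_left_invariant_metric G \<rho> \<and> \<not> asdim_AN_zero (carrier G) \<rho>"
  using rho_proper not_asdim by blast

theorem mainTheorem12:
  fixes G :: "('a, 'b) monoid_scheme"
  assumes "group G"
    and "countable (carrier G)"
    and "locally_finite_group G"
  shows "finite (carrier G) \<longleftrightarrow>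
    (\<forall>\<rho>. proper_left_invariant_metric G \<rho> \<longrightarrow> asdim_AN_zero (carrier G) \<rho>)"
proof
  assume "finite (carrier G)"
  thus "\<forall>\<rho>. proper_left_invariant_metric G \<rho> \<longrightarrow> asdim_AN_zero (carrier G) \<rho>"
    by (intro allI impI) (rule finite_asdim[OF \<open>finite (carrier G)\<close>])
next
  assume all: "\<forall>\<rho>. proper_left_invariant_metric G \<rho> \<longrightarrow> asdim_AN_zero (carrier G) \<rho>"
  show "finite (carrier G)"
  proof (rule ccontr)
    assume "infinite (carrier G)"
    have "lfg G"
      by (rule lfg.intro[OF assms(1) lfg_axioms.intro[OF assms(2) \<open>infinite (carrier G)\<close> assms(3)]])
    hence "\<exists>\<rho>. proper_left_invariant_metric G \<rho> \<and> \<not> asdim_AN_zero (carrier G) \<rho>"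
      by (rule lfg.exists_bad)
    then obtain \<rho> where "proper_left_invariant_metric G \<rho>" "\<not> asdim_AN_zero (carrier G) \<rho>"
      by blast
    thus False using all by blast
  qed
qed


end
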